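(* Let $a\geq 3$ and $m\geq 2a^2-a+2$ be integers, and suppose $[C(m,a)]$ is colored with red and blue so that there is no monochromatic solution of $L(m,a)$ in $[C(m,a)]$, with both $a-2$ and $a-1$ red. Then all of $1,2,\dots,2a-2$ are red.
   Context: For integers $m\geq 3$, $a\geq 1$, $L(m,a)$ denotes the equation $x_1+x_2+\cdots+x_{m-1}=a x_m$. For a positive integer $n$, $[n]=\{1,\dots,n\}$. A solution of $L(m,a)$ in $[n]$ is an $m$-tuple $(x_1,\dots,x_m)\in[n]^m$ (entries not necessarily distinct) satisfying the equation; given a 2-coloring of $[n]$, it is monochromatic if all $x_i$ have the same color. $C(m,a)$ denotes $\left\lceil \frac{m-1}{a}\left\lceil \frac{m-1}{a}\right\rceil\right\rceil$. *)

theory Defs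
  imports Complex_Main
begin

definition Cma :: "nat \<Rightarrow> nat \<Rightarrow> nat" where
  "Cma m a = nat \<lceil>(of_nat (m - 1) / of_nat a :: rat) * of_int \<lceil>of_nat (m - 1) / (of_nat a :: rat)\<rceil>\<rceil>"

definition is_solution :: "nat \<Rightarrow> nat \<Rightarrow> nat \<Rightarrow> (nat \<Rightarrow> nat) \<Rightarrow> bool" where
  "is_solution m a n x \<longleftrightarrow> (\<forall>i\<in>{1..m}. x i \<in> {1..n}) \<and> (\<Sum>i=1..m-1. x i) = a * x m"

text \<open>A 2-colouring c of [n] (True = red, False = blue) admits a monochromatic solution.\<close>
definition has_mono_solution :: "nat \<Rightarrow> nat \<Rightarrow> nat \<Rightarrow> (nat \<Rightarrow> bool) \<Rightarrow> bool" where
  "has_mono_solution m a n c \<longleftrightarrow>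
     (\<exists>x. is_solution m a n x \<and> (\<forall>i\<in>{1..m}. \<forall>j\<in>{1..m}. c (x i) = c (x j)))"

end

theory Submission imports Defs begin

lemma sum_shift: fixes k :: nat and f :: "nat \<Rightarrow> nat" shows "(\<Sum>i=1..k. f (i - 1)) = (\<Sum>i<k. f i)"
proof (induction k)
  case 0 then show ?case by simp
next
  case (Suc k) then show ?case by (simp add: sum.cl_ivl_Suc)
qed

lemma mono_from_list:
  assumes "length xs = m - 1" "m \<ge> 2" "sum_list xs = a * y"
    "\<forall>v\<in>set xs. v \<in> {1..n} \<and> c v = col" "y \<in> {1..n}" "c y = col"
  shows "has_mono_solution m a n c"
proof -
  define x where "x = (\<lambda>i. if i = m then y else xs ! (i - 1))"
  have s: "(\<Sum>i=1..m-1. x i) = (\<Sum>i=1..m-1. xs ! (i - 1))"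
    by (rule sum.cong) (use assms(2) in \<open>auto simp: x_def\<close>)
  also have "\<dots> = (\<Sum>i<m-1. xs ! i)" by (rule sum_shift)
  also have "\<dots> = sum_list xs" using assms(1) by (simp add: sum_list_sum_nth atLeast0LessThan)
  finally have sx: "(\<Sum>i=1..m-1. x i) = a * x m" using assms(3) by (simp add: x_def)
  have mem: "x i \<in> {1..n} \<and> c (x i) = col" if "i \<in> {1..m}" for i
  proof (cases "i = m")
    case True then show ?thesis using assms by (simp add: x_def)
  next
    case False
    then have "i - 1 < length xs" using that assms(1) by auto
    then have "xs ! (i - 1) \<in> set xs" by simp
    then show ?thesis using assms(4) False by (simp add: x_def)
  qed
  show ?thesis unfolding has_mono_solution_def is_solution_def
    using sx mem by (intro exI[of _ x]) auto
qed

lemma divb: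
  fixes x a :: nat assumes "a > 0"
  shows "a * (x div a) \<le> x" "x < a * (x div a) + a"
proof -
  have e: "x = a * (x div a) + x mod a" by simp
  have "x mod a < a" using assms by simp
  then show "a * (x div a) \<le> x" "x < a * (x div a) + a" using e by linarith+
qed

lemma decomp:
  fixes d s lo hi :: nat
  assumes "d * lo \<le> s" "s \<le> d * hi"
  shows "\<exists>zs. length zs = d \<and> sum_list zs = s \<and> set zs \<subseteq> {lo..hi}"
proof (cases "d = 0")
  case True then show ?thesis using assms by (intro exI[of _ "[]"]) auto
next
  case False
  define q r where "q = s div d" and "r = s mod d"
  have sd: "s = d * q + r" by (simp add: q_def r_def)
  have rd: "r < d" using False by (simp add: r_def)
  have qlo: "lo \<le> q"
  proof (rule ccontr)
    assume "\<not> lo \<le> q" then have "q + 1 \<le> lo" by simp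
    then have "d * (q+1) \<le> d * lo" by (rule mult_le_mono2)
    then show False using assms(1) sd rd by (simp add: algebra_simps)
  qed
  have qhi: "q \<le> hi"
  proof (rule ccontr)
    assume "\<not> q \<le> hi" then have "hi + 1 \<le> q" by simp
    then have "d * (hi+1) \<le> d * q" by (rule mult_le_mono2)
    then show False using assms(2) sd False by (simp add: algebra_simps)
  qed
  have q1: "r > 0 \<Longrightarrow> q + 1 \<le> hi"
  proof (rule ccontr)
    assume "r > 0" "\<not> q + 1 \<le> hi" then have "hi \<le> q" by simp
    then have "d * hi \<le> d * q" by (rule mult_le_mono2)
    then show False using assms(2) sd \<open>r > 0\<close> by linarith
  qed
  show ?thesis
    apply (intro exI[of _ "replicate r (q+1) @ replicate (d - r) q"])
    using rd sd qlo qhi q1 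
    by (auto simp: sum_list_replicate algebra_simps diff_mult_distrib2 diff_mult_distrib
      intro: le_trans[OF _ qhi])
qed


lemma P1: fixes k i d a :: int
  assumes "a = i+d+1" "i \<ge> 1" "d \<ge> 2" "k \<ge> 2*a^2 - a + 1"
  shows "a*(k-d)*i + d*(k*(a-2)+a-1) \<le> a*(k*(a-1)-(a-1))"
proof -
  obtain e p q :: nat where E: "k = 2*a^2-a+1 + int e" "i = 1 + int p" "d = 2 + int q"
    using assms by (metis add.commute le_add_diff_inverse zle_iff_zadd)
  have "a*(k*(a-1)-(a-1)) - (a*(k-d)*i + d*(k*(a-2)+a-1)) = int (106 + 112*q + 37*q^2 + 4*q^3 + 61*p + 50*p*q + 9*p*q^2 + 9*p^2 + 5*p^2*q + 4*e + 2*e*q)"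
    unfolding assms(1) E by (simp add: algebra_simps power2_eq_square power3_eq_cube)
  then show ?thesis by linarith
qed

lemma P2: fixes k i d a :: int
  assumes "a = i+d+1" "i \<ge> 1" "d \<ge> 2" "k \<ge> 2*a^2 - a + 1"
  shows "a*(k*(a-2)+a-1) \<le> a*(k-d)*i + d*(k*(a-1)-(a-1))"
proof -
  obtain e p q :: nat where E: "k = 2*a^2-a+1 + int e" "i = 1 + int p" "d = 2 + int q"
    using assms by (metis add.commute le_add_diff_inverse zle_iff_zadd)
  have "a*(k-d)*i + d*(k*(a-1)-(a-1)) - a*(k*(a-2)+a-1) = int (32 + 12*q + q^2 + 40*p + 13*p*q + p*q^2 + 16*p^2 + 3*p^2*q + 2*p^3 + 2*e + e*p)"
    unfolding assms(1) E by (simp add: algebra_simps power2_eq_square power3_eq_cube)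
  then show ?thesis by linarith
qed

lemma P3: fixes k a :: int
  assumes "a \<ge> 3" "k \<ge> 2*a^2 - a + 1"
  shows "k*(2*a-1) \<le> a*(a-1)*(k-a+1)"
proof -
  obtain e p :: nat where E: "k = 2*a^2-a+1 + int e" "a = 3 + int p"
    using assms by (metis add.commute le_add_diff_inverse zle_iff_zadd)
  have "a*(a-1)*(k-a+1) - k*(2*a-1) = int (4 + 43*p + 44*p^2 + 16*p^3 + 2*p^4 + e + 3*e*p + e*p^2)"
    unfolding E by (simp add: algebra_simps power2_eq_square power3_eq_cube power4_eq_xxxx)
  then show ?thesis by linarith
qed

theorem lemma8:
  fixes m a :: nat and red :: "nat \<Rightarrow> bool"
  assumes "a \<ge> 3"
    and "m \<ge> 2 * a^2 - a + 2"
    and "\<not> has_mono_solution m a (Cma m a) red"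
    and "red (a - 2)" and "red (a - 1)"
  shows "\<forall>i\<in>{1..2*a-2}. red i"
proof -
  define k where "k = m - 1"
  define n where "n = Cma m a"
  have a3: "a \<ge> 3" by fact
  have "a \<le> a * a" by simp
  then have a2: "a \<le> a^2" by (simp add: power2_eq_square)
  have m2: "m \<ge> 2" using assms(2) a2 by linarith
  have kge: "k \<ge> 2*a^2 - a + 1" using assms(2) a2 unfolding k_def by linarith
  have "a \<le> 2*a^2" using a2 by linarith
  then have "int (2*a^2 - a) = 2*(int a)^2 - int a" by (simp add: of_nat_diff)
  then have kgei: "int k \<ge> 2*(int a)^2 - int a + 1" using kge by linarith
  define T where "T = \<lceil>of_nat k / (of_nat a :: rat)\<rceil>"
  have T1: "of_nat k / of_nat a \<le> (of_int T :: rat)" unfolding T_def by (rule le_of_int_ceiling)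
  have T0: "T \<ge> 0" using T1 
    by (metis of_int_0_le_iff of_nat_0_le_iff divide_nonneg_nonneg order_trans)
  define t where "t = nat T"
  have Tt: "(of_int T :: rat) = of_nat t" using T0 unfolding t_def by simp
  have apos: "(0::rat) < of_nat a" using a3 by simp
  have "of_nat k \<le> (of_nat a * of_nat t :: rat)" using T1 Tt apos by (simp add: divide_le_eq mult.commute)
  then have kat: "k \<le> a * t" by (metis of_nat_le_iff of_nat_mult)
  have nd: "n = nat \<lceil>(of_nat k / of_nat a :: rat) * of_int T\<rceil>"
    unfolding n_def Cma_def k_def T_def ..
  define X where "X = \<lceil>(of_nat k / of_nat a :: rat) * of_int T\<rceil>"
  have "(of_nat k / of_nat a :: rat) * of_int T \<le> of_int X"
    unfolding X_def by (rule le_of_int_ceiling)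
  also have "X \<le> int (nat X)" by simp
  then have "(of_int X :: rat) \<le> of_int (int (nat X))" by (simp only: of_int_le_iff)
  also have "(of_int (int (nat X)) :: rat) = of_nat n" unfolding nd X_def by simp
  finally have "(of_nat k / of_nat a :: rat) * of_nat t \<le> of_nat n" using Tt by simp
  then have "(of_nat k * of_nat t :: rat) \<le> of_nat a * of_nat n" using apos
    by (simp add: divide_le_eq mult.commute)
  then have ktan: "k * t \<le> a * n" by (metis of_nat_le_iff of_nat_mult)
  have t2a: "2 * a \<le> t"
  proof (rule ccontr)
    assume "\<not> 2 * a \<le> t"
    then have "t + 1 \<le> 2 * a" by simp
    then have "a * (t + 1) \<le> a * (2 * a)" by (rule mult_le_mono2)
    then show False using kat kge by (simp add: algebra_simps power2_eq_square)
  qed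
  have "a * (2 * k) \<le> a * n"
  proof -
    have "k * (2 * a) \<le> k * t" using t2a by (rule mult_le_mono2)
    moreover have "a*(2*k) = k*(2*a)" by simp
    ultimately show ?thesis using ktan by linarith
  qed
  then have n2k: "2 * k \<le> n" using a3 by simp
  have ka: "a \<le> k" using kge a2 by linarith
  have nomono: False if "length xs = k" "sum_list xs = a*y"
    "\<forall>v\<in>set xs. v\<in>{1..n} \<and> red v = col" "y\<in>{1..n}" "red y = col" for xs y col
    using mono_from_list[of xs m a y n red col] that m2 assms(3) unfolding k_def n_def by blast
  define L where "L = (k*(a-2) + (a-1)) div a"
  define U where "U = (k*(a-1)) div a"
  have a0: "a > 0" using a3 by simp
  have hL2: "a * L \<le> k*(a-2) + (a-1)" unfolding L_def by (rule divb[OF a0])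
  have "k*(a-2) + (a-1) < a * L + a" unfolding L_def by (rule divb[OF a0])
  then have hL1: "k*(a-2) \<le> a * L" by linarith
  have hU1: "a * U \<le> k*(a-1)" unfolding U_def by (rule divb[OF a0])
  have "k*(a-1) < a * U + a" unfolding U_def by (rule divb[OF a0])
  then have hU2: "k*(a-1) \<le> a * U + (a - 1)" by linarith
  have ia2: "int (a - 2) = int a - 2" "int (a-1) = int a - 1" using a3 by auto
  have iL1: "int k * (int a - 2) \<le> int a * int L" using hL1 ia2
    by (metis of_nat_le_iff of_nat_mult)
  have iL2: "int a * int L \<le> int k * (int a - 2) + (int a - 1)" using hL2 ia2
    by (metis of_nat_le_iff of_nat_mult of_nat_add)
  have iU1: "int a * int U \<le> int k * (int a - 1)" using hU1 ia2
    by (metis of_nat_le_iff of_nat_mult)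
  have iU2: "int k * (int a - 1) \<le> int a * int U + (int a - 1)" using hU2 ia2
    by (metis of_nat_le_iff of_nat_mult of_nat_add)
  have UL: "L + (a - 1) \<le> U"
  proof -
    have "int a * 2 \<le> int a * int a" using a3 by (intro mult_left_mono) auto
    then have kk: "int k \<ge> int a * int a + int a - 2" using kgei by (simp add: power2_eq_square)
    have "int a * (int L + (int a - 1)) \<le> int a * int U"
      using iL2 iU2 kk by (simp add: algebra_simps)
    then have "int L + (int a - 1) \<le> int U" using a0 by (simp add: mult_le_cancel_left)
    then show ?thesis using a0 by linarith
  qed
  have L1: "L \<ge> 1"
  proof -
    have "k * 1 \<le> k * (a-2)" using a3 by (intro mult_le_mono2) linarith
    then have "a * 1 \<le> a * L" using hL1 ka by linarith
    then show ?thesis using a0 by simp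
  qed
  have Uk: "U < k"
  proof -
    have "k*(a-1) < k * a" using a0 ka by simp
    then have "a * U < a * k" using hU1 by (simp only: mult.commute[of k a])
    then show ?thesis by (meson nat_mult_less_cancel_disj)
  qed
  have an: "a \<le> n" using n2k ka by linarith
  have blue0: "\<not> red y" if "L \<le> y" "y \<le> U" for y
  proof
    assume ry: "red y"
    have "a * L \<le> a * y" "a * y \<le> a * U" using that by simp_all
    then have "k * (a-2) \<le> a*y" "a*y \<le> k*(a-1)" using hL1 hU1 by linarith+
    then obtain zs where zs: "length zs = k" "sum_list zs = a*y" "set zs \<subseteq> {a-2..a-1}"
      using decomp[of k "a-2" "a*y" "a-1"] by blast
    have "\<forall>v\<in>set zs. v\<in>{1..n} \<and> red v = True"
    proof
      fix v assume "v \<in> set zs"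
      then have v: "a - 2 \<le> v" "v \<le> a - 1" using zs(3) by auto
      then have "v = a - 2 \<or> v = a - 1" by linarith
      then show "v\<in>{1..n} \<and> red v = True" using v assms(4,5) a3 an by auto
    qed
    moreover have "y \<in> {1..n}" using that L1 Uk n2k by auto
    ultimately show False using nomono[OF zs(1) zs(2)] ry by blast
  qed
  have small: "red i" if i1: "1 \<le> i" and ia: "i \<le> a - 1" for i
  proof (cases "a - 2 \<le> i")
    case True
    then have "i = a - 2 \<or> i = a - 1" using ia by linarith
    then show ?thesis using assms(4,5) by auto
  next
    case False
    show ?thesis
    proof (rule ccontr)
      assume bi: "\<not> red i"
      define d where "d = a - 1 - i"
      have d2: "d \<ge> 2" using False unfolding d_def by linarith
      have dk: "d \<le> k" using ka unfolding d_def by linarith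
      define A1 where "A1 = (k - d) * i + d * L"
      define A2 where "A2 = (k - d) * i + d * U"
      have iA: "int a = int i + int d + 1" unfolding d_def using False by linarith
      have ikd: "int (k - d) = int k - int d" using dk by simp
      have C1: "A1 \<le> a * U"
      proof -
        have p: "int a*(int k - int d)*int i + int d*(int k*(int a-2)+int a-1) \<le> int a*(int k*(int a-1)-(int a-1))"
          using P1[OF iA _ _ kgei] i1 d2 by linarith
        have q: "int d * (int a * int L) \<le> int d * (int k*(int a-2)+int a-1)"
          using iL2 by (intro mult_left_mono) auto
        have r: "int a * (int k*(int a-1)-(int a-1)) \<le> int a * (int a * int U)"
          using iU2 by (intro mult_left_mono) auto
        have iA1: "int A1 = int (k - d) * int i + int d * int L" unfolding A1_def by simp
        have "int a * int A1 = int a*(int k - int d)*int i + int d*(int a*int L)"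
          unfolding iA1 ikd by (simp add: algebra_simps)
        then have "int a * int A1 \<le> int a * (int a * int U)"
          using p q r by linarith
        then have "int A1 \<le> int a * int U" using a0 by (simp add: mult_le_cancel_left)
        then show ?thesis by (metis of_nat_le_iff of_nat_mult)
      qed
      have C2: "a * L \<le> A2"
      proof -
        have p: "int a*(int k*(int a-2)+int a-1) \<le> int a*(int k - int d)*int i + int d*(int k*(int a-1)-(int a-1))"
          using P2[OF iA _ _ kgei] i1 d2 by linarith
        have q: "int d * (int k*(int a-1)-(int a-1)) \<le> int d * (int a * int U)"
          using iU2 by (intro mult_left_mono) auto
        have r: "int a * (int a * int L) \<le> int a * (int k*(int a-2)+int a-1)"
          using iL2 by (intro mult_left_mono) auto
        have iA2: "int A2 = int (k - d) * int i + int d * int U" unfolding A2_def by simp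
        have "int a * int A2 = int a*(int k - int d)*int i + int d*(int a*int U)"
          unfolding iA2 ikd by (simp add: algebra_simps)
        then have "int a * (int a * int L) \<le> int a * int A2"
          using p q r by linarith
        then have "int a * int L \<le> int A2" using a0 by (simp add: mult_le_cancel_left)
        then show ?thesis by (metis of_nat_le_iff of_nat_mult)
      qed
      have C3: "A1 + (a - 1) \<le> A2"
      proof -
        have "d * L + d * (a - 1) \<le> d * U" using UL by (metis add_mult_distrib2 mult_le_mono2)
        moreover have "a - 1 \<le> d * (a - 1)" using d2 by simp
        ultimately show ?thesis unfolding A1_def A2_def by linarith
      qed
      define c where "c = (A1 + (a - 1)) div a"
      have c1: "a * c \<le> A1 + (a - 1)" unfolding c_def by (rule divb[OF a0])
      have c2: "A1 + (a-1) < a * c + a" unfolding c_def by (rule divb[OF a0])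
      define y where "y = max L c"
      have yL: "L \<le> y" "A1 \<le> a * y" "a * y \<le> A2" "y \<le> U"
      proof -
        show "L \<le> y" unfolding y_def by simp
        have "A1 \<le> a * c" using c2 by linarith
        moreover have "a * c \<le> a * y" unfolding y_def by simp
        ultimately show "A1 \<le> a * y" by linarith
        show "a * y \<le> A2"
        proof (cases "L \<le> c")
          case True then show ?thesis using c1 C3 unfolding y_def by simp
        next
          case False then show ?thesis using C2 unfolding y_def by simp
        qed
        have "a * c < a * U + a" using c1 C1 a0 by linarith
        then have "a * c < a * (U + 1)" by simp
        then have "c < U + 1" by (meson nat_mult_less_cancel_disj)
        then have "c \<le> U" by simp
        then show "y \<le> U" using UL unfolding y_def by simp
      qed
      define S where "S = a * y - (k - d) * i"
      have S1: "d * L \<le> S" "S \<le> d * U" using yL unfolding S_def A1_def A2_def by linarith+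
      obtain zs where zs: "length zs = d" "sum_list zs = S" "set zs \<subseteq> {L..U}"
        using decomp[OF S1] by blast
      define xs where "xs = replicate (k - d) i @ zs"
      have "length xs = k" using dk zs by (simp add: xs_def)
      moreover have "sum_list xs = a * y" using zs yL unfolding xs_def S_def A1_def
        by (simp add: sum_list_replicate)
      moreover have "\<forall>v\<in>set xs. v\<in>{1..n} \<and> red v = False"
      proof
        fix v assume "v \<in> set xs"
        then have "v = i \<or> v \<in> {L..U}" using zs(3) unfolding xs_def
          by (auto dest: in_set_replicate[THEN iffD1])
        then show "v\<in>{1..n} \<and> red v = False"
          using blue0 bi i1 ia an Uk n2k L1 by auto
      qed
      moreover have "y \<in> {1..n}" using yL L1 Uk n2k by auto
      ultimately show False using nomono blue0[OF yL(1) yL(4)] by blast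
    qed
  qed
  have big: "red j" if j1: "a \<le> j" and j2: "j \<le> 2*a - 2" for j
  proof (rule ccontr)
    assume bj: "\<not> red j"
    define y where "y = ((k-1)*j + L + (a-1)) div a"
    have y1: "a * y \<le> (k-1)*j + L + (a-1)" unfolding y_def by (rule divb[OF a0])
    have "(k-1)*j + L + (a-1) < a * y + a" unfolding y_def by (rule divb[OF a0])
    then have y2: "(k-1)*j + L \<le> a * y" by linarith
    define b where "b = a * y - (k-1)*j"
    have bLU: "L \<le> b" "b \<le> U" using y1 y2 UL unfolding b_def by linarith+
    have "k * (j + 2) \<le> k * (2 * a)" using j2 a3 by (intro mult_le_mono2) linarith
    then have kj: "k * j + 2 * k \<le> a * (2 * k)" by (simp add: algebra_simps)
    have "(k-1)*j \<le> k * j" by simp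
    then have ay: "a * y \<le> k * j + k" using y1 UL Uk by linarith
    then have "a * y \<le> a * (2 * k)" using kj by linarith
    then have yn: "y \<le> n" using a0 n2k by simp
    have "(k-1)*a \<le> (k-1)*j" using j1 by (rule mult_le_mono2)
    moreover have "(k-1)*a = a * (k-1)" by simp
    ultimately have "a * (k-1) \<le> a * y" using y2 by linarith
    then have yk: "k - 1 \<le> y" using a0 by (meson nat_mult_le_cancel_disj)
    have y0: "1 \<le> y" using yk ka a3 by linarith
    have ry: "red y"
    proof (rule ccontr)
      assume hb: "\<not> red y"
      define xs where "xs = replicate (k-1) j @ [b]"
      have "length xs = k" using ka a3 by (simp add: xs_def)
      moreover have "sum_list xs = a * y" using y2 unfolding xs_def b_def
        by (simp add: sum_list_replicate)
      moreover have "\<forall>v\<in>set xs. v\<in>{1..n} \<and> red v = False"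
      proof
        fix v assume "v \<in> set xs"
        then have "v = j \<or> v = b" unfolding xs_def
          by (auto dest: in_set_replicate[THEN iffD1])
        then show "v\<in>{1..n} \<and> red v = False"
          using blue0[OF bLU] bj j1 j2 a3 bLU L1 Uk n2k ka by auto
      qed
      ultimately show False using nomono[of xs y False] y0 yn hb by auto
    qed
    have kj2: "k * j + k \<le> k * (2*a - 1)"
    proof -
      have "k * (j + 1) \<le> k * (2*a - 1)" using j2 a3 by (intro mult_le_mono2) linarith
      then show ?thesis by (simp add: algebra_simps)
    qed
    have P: "int k*(2*int a-1) \<le> int a*(int a-1)*(int k-int a+1)"
      using P3[OF _ kgei] a3 by linarith
    have i2a: "int (2*a - 1) = 2 * int a - 1" using a3 by simp
    have "int (a * y) \<le> int (k * (2*a - 1))" using ay kj2 by linarith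
    then have "int a * int y \<le> int k * (2 * int a - 1)" using i2a by simp
    then have "int a * int y \<le> int a * ((int a - 1) * (int k - int a + 1))" using P
      by (simp add: algebra_simps)
    then have "int y \<le> (int a - 1) * (int k - int a + 1)" using a0 by (simp add: mult_le_cancel_left)
    moreover have "int ((k - (a-1)) * (a-1)) = (int a - 1) * (int k - int a + 1)" using a3 ka
      by (simp add: of_nat_diff)
    ultimately have yup: "y \<le> (k - (a-1)) * (a-1)" by linarith
    have ylo: "(k - (a-1)) * 1 \<le> y" using yk a3 by linarith
    obtain zs where zs: "length zs = k - (a-1)" "sum_list zs = y" "set zs \<subseteq> {1..a-1}"
      using decomp[OF ylo yup] by blast
    define xs where "xs = replicate (a-1) y @ zs"
    have "length xs = k" using ka zs by (simp add: xs_def)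
    moreover have "sum_list xs = a * y" using zs a3 unfolding xs_def
      by (simp add: sum_list_replicate algebra_simps diff_mult_distrib)
    moreover have "\<forall>v\<in>set xs. v\<in>{1..n} \<and> red v = True"
    proof
      fix v assume "v \<in> set xs"
      then have "v = y \<or> v \<in> {1..a-1}" using zs(3) unfolding xs_def
        by (auto dest: in_set_replicate[THEN iffD1])
      then show "v\<in>{1..n} \<and> red v = True"
        using small ry y0 yn an by auto
    qed
    ultimately show False using nomono[of xs y True] y0 yn ry by auto
  qed
  show ?thesis
  proof
    fix i assume "i \<in> {1..2*a-2}"
    then show "red i" using small big by (cases "i \<le> a - 1") auto
  qed
qed
end
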